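(* Let $\mathbb{H}\in\{\mathbb{R},\mathbb{C}\}$, let $A\in\mathbb{H}^{m\times d}$ be any matrix, and let $\Omega\subset U_A$ be a convex domain. Then the map $b\mapsto P_{\mathcal{K}_A}(b)$ is continuous on $\Omega$.
   Context: $\mathcal{K}_A:=\{|Ax|:x\in\mathbb{H}^d\}\subset\mathbb{R}^m$ with $|Ax|$ the entrywise modulus; $P_{\mathcal{K}_A}(b)$ is the set of points of $\mathcal{K}_A$ at minimal Euclidean distance from $b$; $U_A:=\{b\in\mathbb{R}^m: P_{\mathcal{K}_A}(b)\text{ has exactly one element}\}$, and on $U_A$ the map $P_{\mathcal{K}_A}$ is regarded as single-valued. *)

theory Defs
  imports "HOL-Analysis.Analysis"
begin

text \<open>Matrices over H (H = real or complex) of size m x d are represented as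
  elements of H^'d^'m (rows indexed by 'm).\<close>

definition KA :: "('a::real_normed_field) ^'d^'m \<Rightarrow> (real^'m) set" where
  "KA A = {(\<chi> i. norm ((A *v x) $ i)) | x. True}"

definition proj_set :: "(real^'m) set \<Rightarrow> real^'m \<Rightarrow> (real^'m) set" where
  "proj_set K b = {y \<in> K. \<forall>z\<in>K. dist b y \<le> dist b z}"

definition UA :: "('a::real_normed_field) ^'d^'m \<Rightarrow> (real^'m) set" where
  "UA A = {b. \<exists>!y. y \<in> proj_set (KA A) b}"

text \<open>Single-valued projection (meaningful on UA A).\<close>
definition projA :: "('a::real_normed_field) ^'d^'m \<Rightarrow> real^'m \<Rightarrow> real^'m" where
  "projA A b = (THE y. y \<in> proj_set (KA A) b)"

end

theory Submission
  imports Defs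
begin

lemma KA_closed:
  fixes A :: "('a::{real_normed_field,euclidean_space})^'d^'m"
  shows "closed (KA A)"
proof -
  define V where "V = range (\<lambda>x. A *v x)"
  define f :: "'a^'m \<Rightarrow> real^'m" where "f = (\<lambda>y. \<chi> i. norm (y $ i))"
  have sub: "subspace V"
    unfolding subspace_def V_def
  proof (intro conjI ballI allI)
    show "0 \<in> range (\<lambda>x. A *v x)"
      by (metis matrix_vector_mult_0_right rangeI)
    fix x y assume "x \<in> range (\<lambda>x. A *v x)" "y \<in> range (\<lambda>x. A *v x)"
    then obtain u v where "x = A *v u" "y = A *v v" by auto
    then show "x + y \<in> range (\<lambda>x. A *v x)"
      by (metis matrix_vector_right_distrib rangeI)
  next
    fix c :: real and x assume "x \<in> range (\<lambda>x. A *v x)"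
    then obtain u where u: "x = A *v u" by auto
    have "c *\<^sub>R (A *v u) = A *v (c *\<^sub>R u)"
      by (simp add: vec_eq_iff matrix_vector_mult_def scaleR_sum_right)
    then show "c *\<^sub>R x \<in> range (\<lambda>x. A *v x)" using u by auto
  qed
  have clV: "closed V" using closed_subspace[OF sub] .
  have KAeq: "KA A = f ` V" unfolding KA_def f_def V_def by auto
  have normf: "norm (f y) = norm y" for y
    unfolding f_def norm_vec_def by simp
  have contf: "continuous_on UNIV f"
    unfolding f_def by (intro continuous_intros)
  show ?thesis
    unfolding KAeq closed_sequential_limits
  proof (intro allI impI, elim conjE)
    fix s l assume sin: "\<forall>n. s n \<in> f ` V" and lim: "s \<longlonglongrightarrow> l"
    have "\<forall>n. \<exists>v. v \<in> V \<and> s n = f v" using sin by blast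
    then obtain y where yy: "\<forall>n. y n \<in> V \<and> s n = f (y n)" by metis
    then have y: "\<And>n. y n \<in> V" "\<And>n. s n = f (y n)" by auto
    have "bounded (range s)" using lim convergent_imp_bounded by blast
    then obtain B where B: "\<And>n. norm (s n) \<le> B"
      by (meson bounded_iff rangeI)
    have "\<And>n. y n \<in> cball 0 B \<inter> V" using B y normf by simp
    moreover have "compact (cball 0 B \<inter> V)"
      using clV by (simp add: compact_Int_closed)
    ultimately obtain y0 r where y0: "y0 \<in> cball 0 B \<inter> V" "strict_mono r" "(y \<circ> r) \<longlonglongrightarrow> y0"
      using compact_imp_seq_compact[unfolded seq_compact_def, rule_format, of "cball 0 B \<inter> V" y]
      by blast
    have "isCont f y0" using contf continuous_on_eq_continuous_at open_UNIV by blast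
    from isCont_tendsto_compose[OF this y0(3)]
    have "((f \<circ> y) \<circ> r) \<longlonglongrightarrow> f y0" by (simp add: comp_def)
    moreover have "((f \<circ> y) \<circ> r) \<longlonglongrightarrow> l"
      using LIMSEQ_subseq_LIMSEQ[OF lim y0(2)] y(2) by (simp add: comp_def)
    ultimately have "l = f y0" using LIMSEQ_unique by blast
    then show "l \<in> f ` V" using y0 by auto
  qed
qed

lemma proj_cont:
  fixes K :: "(real^'m) set" and g :: "real^'m \<Rightarrow> real^'m"
  assumes clK: "closed K" and K0: "0 \<in> K" and opn: "open \<Omega>"
    and pr: "\<And>b. b \<in> \<Omega> \<Longrightarrow> g b \<in> proj_set K b"
    and un: "\<And>b y. b \<in> \<Omega> \<Longrightarrow> y \<in> proj_set K b \<Longrightarrow> y = g b"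
  shows "continuous_on \<Omega> g"
proof -
  define G where "G = (\<Inter>z\<in>K. {p::(real^'m)\<times>(real^'m). dist (fst p) (snd p) \<le> dist (fst p) z}) \<inter> (UNIV \<times> K)"
  have clG: "closed G"
    unfolding G_def
    by (intro closed_Int closed_INT ballI closed_Times clK closed_UNIV closed_Collect_le continuous_intros)
  have Gmem: "(b, y) \<in> G \<longleftrightarrow> y \<in> proj_set K b" for b y
    unfolding G_def proj_set_def by auto
  have "isCont g c" if c: "c \<in> \<Omega>" for c
  proof -
    define S where "S = \<Omega> \<inter> ball c 1"
    define T where "T = cball (0::real^'m) (2 * (norm c + 1))"
    have opS: "open S" unfolding S_def using opn by auto
    have cS: "c \<in> S" unfolding S_def using c by auto
    have fim: "g \<in> S \<rightarrow> T"
    proof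
      fix b assume b: "b \<in> S"
      have bO: "b \<in> \<Omega>" using b unfolding S_def by blast
      have "g b \<in> proj_set K b" using pr[OF bO] .
      then have p: "g b \<in> K" "dist b (g b) \<le> dist b 0"
        using K0 unfolding proj_set_def by blast+
      have "norm (g b) \<le> norm b + dist b (g b)"
        by (metis dist_commute dist_norm norm_triangle_sub add.commute)
      moreover have "dist b 0 = norm b" by simp
      moreover have "norm b \<le> norm c + 1"
        using b unfolding S_def by (smt (verit) IntD2 dist_norm mem_ball norm_minus_commute norm_triangle_sub)
      ultimately show "g b \<in> T" unfolding T_def using p by simp
    qed
    have eq: "(\<lambda>x. (x, g x)) ` S = (S \<times> T) \<inter> G"
    proof
      show "(\<lambda>x. (x, g x)) ` S \<subseteq> (S \<times> T) \<inter> G"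
      proof
        fix p assume "p \<in> (\<lambda>x. (x, g x)) ` S"
        then obtain b where b: "b \<in> S" "p = (b, g b)" by blast
        have "g b \<in> T" using fim b(1) by blast
        moreover have "b \<in> \<Omega>" using b(1) unfolding S_def by blast
        then have "(b, g b) \<in> G" using Gmem pr by blast
        ultimately show "p \<in> (S \<times> T) \<inter> G" using b by blast
      qed
      show "(S \<times> T) \<inter> G \<subseteq> (\<lambda>x. (x, g x)) ` S"
      proof
        fix p assume "p \<in> (S \<times> T) \<inter> G"
        then obtain b y where "p = (b, y)" "b \<in> S" "y \<in> proj_set K b"
          using Gmem by (metis IntD1 IntD2 SigmaE)
        moreover have "b \<in> \<Omega>" using \<open>b \<in> S\<close> unfolding S_def by blast
        ultimately show "p \<in> (\<lambda>x. (x, g x)) ` S" using un by blast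
      qed
    qed
    have cT: "compact T" unfolding T_def by simp
    have "closedin (top_of_set (S \<times> T)) ((S \<times> T) \<inter> G)"
      by (rule closedin_closed_Int[OF clG])
    then have "continuous_on S g"
      using continuous_closed_graph_eq[OF cT fim] eq by simp
    then show ?thesis using continuous_on_eq_continuous_at[OF opS] cS by blast
  qed
  then show ?thesis by (simp add: continuous_at_imp_continuous_on)
qed

lemma main_gen:
  fixes A :: "('a::{real_normed_field,euclidean_space})^'d^'m"
  assumes "open \<Omega>" "\<Omega> \<subseteq> UA A"
  shows "continuous_on \<Omega> (projA A)"
proof (rule proj_cont[OF KA_closed _ assms(1)])
  show "0 \<in> KA A" unfolding KA_def
    by (rule CollectI, rule exI[of _ 0]) (simp add: vec_eq_iff)
  fix b assume "b \<in> \<Omega>"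
  then have u: "\<exists>!y. y \<in> proj_set (KA A) b" using assms(2) unfolding UA_def by auto
  show "projA A b \<in> proj_set (KA A) b" unfolding projA_def using theI'[OF u] .
  fix y assume "y \<in> proj_set (KA A) b"
  then show "y = projA A b" unfolding projA_def using u the1_equality by metis
qed

theorem lemma5p4:
  shows "(\<forall>(A::real^'d^'m) (\<Omega>::(real^'m) set).
            open \<Omega> \<and> connected \<Omega> \<and> convex \<Omega> \<and> \<Omega> \<subseteq> UA A
              \<longrightarrow> continuous_on \<Omega> (projA A))
       \<and> (\<forall>(A::complex^'d^'m) (\<Omega>::(real^'m) set).
            open \<Omega> \<and> connected \<Omega> \<and> convex \<Omega> \<and> \<Omega> \<subseteq> UA A
              \<longrightarrow> continuous_on \<Omega> (projA A))"
  by (intro conjI allI impI main_gen; elim conjE; assumption)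

end
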